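(* Let $k>2$, let $T_k$ be the theory of the countable universal homogeneous $k$-uniform hypergraph in $\mathcal{L}_k=\{R\}$ ($R$ $k$-ary), $\mathcal{U}$ a monster model of $T_k$ and $M\prec\mathcal{U}$ a countable elementary submodel. Suppose that $W$ is a Borel $k$-ary hypergraphon. Then $\mu_W$ is $M$-invariant, i.e. $\mu_W(\varphi(x,\bar a))=\mu_W(\varphi(x,\bar b))$ for every $\mathcal{L}_k$-formula $\varphi(x,\bar y)$ and all $\bar a\equiv_M\bar b$.
   Context: Local type spaces. For a finite set $I$ with $1\le|I|\le k-1$, $S^{\flat}_I$ is the space of complete $R$-types over $M$ in the variables $\{x_i:i\in I\}$: maximal consistent sets of formulas $R(\bar x_I,D)$, $\neg R(\bar x_I,D)$ with $D\subseteq M$, $|D|=k-|I|$ (independent of the order of variables; the same applies to any set of named variables). $\lambda_I$ is the Borel probability measure on $S^{\flat}_I$ such that for distinct $D_1,\dots,D_{n+m}\subseteq M$ of size $k-|I|$ the set of types containing $R(\bar x_I,D_l)$ for $l\le n$ and $\neg R(\bar x_I,D_l)$ for $n<l\le n+m$ has measure $2^{-(n+m)}$. For $D\subseteq\mathcal{U}$ with $1\le|D|\le k-1$, $\operatorname{tp}^{\flat}(D)=\{R(\bar x,E):E\subseteq M,|E|=k-|D|,\mathcal{U}\models R(D,E)\}\cup\{\neg R(\bar x,E):\mathcal{U}\models\neg R(D,E)\}$. Hypergraphons. $\mathfrak{m}$ is Lebesgue measure. A $k$-ary hypergraphon is a measurable $W\colon\prod_{I\subseteq[k],1\le|I|\le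 k-1}[0,1]\to[0,1]$ invariant under the action of $\mathrm{Sym}(k)$ permuting the index sets; Borel if Borel measurable. Fix for each $1\le j\le k-1$ a measure isomorphism between $(S^{\flat}_{[j]},\lambda_{[j]})$ and $([0,1],\mathfrak{m})$, transported to every $S^{\flat}_I$ with $|I|=j$; via these, $W$ is regarded as a function on $\prod_{I}S^{\flat}_I$. The measure $\mu_W$. For finite $B\subseteq M$ and $C\subseteq\mathcal{U}\setminus M$, a complete formula over $BC$ is $\Xi(x,B,C)=\bigwedge R^{\epsilon(B_0,C_0)}(x,B_0,C_0)$ over all $B_0\subseteq B$, $C_0\subseteq C$ with $|B_0|+|C_0|=k-1$, $\epsilon(B_0,C_0)\in\{1,-1\}$, $R^1=R$, $R^{-1}=\neg R$; $\Xi_B$ is the subconjunction with $C_0=\emptyset$. Let $\mathbb{S}_C=\prod_{C_0\subseteq C,1\le|C_0|\le k-2}S^{\flat}_{\{x\}\cup\bar z_{C_0}}$ with fresh variables $\bar z_{C_0}$; $\bar q=(q_{C_0})$; $\bar\lambda$ the product of the $\lambda$-measures on $S^{\flat}_{\{x\}}\times\mathbb{S}_C$. For $C_0=\{c_1,\dots,c_{k-1}\}\subseteq C$, $(p,\mathring{\mathbf{q}}_{[C_0]})$ is the argument of $W$ obtained by identifying $[k]$ with $\{x,c_1,\dots,c_{k-1}\}$, assigning to $\{x\}$ the type $p$, to nonempty $D\subseteq C_0$ the type $\operatorname{tp}^{\flat}(D)$, and to $\{x\}\cup D$ ($\emptyset\ne D\subsetneq C_0$) the type $q_D$. With $W^1=W$,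 $W^{-1}=1-W$: $\mu_W(\Xi)=\int_{p\in S^{\flat}_{\{x\}}}\int_{\bar q\in\mathbb{S}_C}\mathbf{1}_{\Xi_B}(p)\prod_{C_0\subseteq C,1\le|C_0|\le k-2}\prod_{B_0\subseteq B,|B_0|=k-1-|C_0|}\mathbf{1}[R^{\epsilon(B_0,C_0)}(x,B_0,\bar z_{C_0})\in q_{C_0}]\prod_{C_0\subseteq C,|C_0|=k-1}W^{\epsilon(\emptyset,C_0)}(p,\mathring{\mathbf{q}}_{[C_0]})\,d\bar\lambda$. Finite sets get measure $0$ and $\mu_W$ is extended additively to all formulas (every definable set in $x$ differs by a finite set from a finite disjoint union of complete formulas); this gives a Keisler measure (finitely additive probability measure on formulas) on $\mathcal{L}_x(\mathcal{U})$. *)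

theory Defs
  imports "HOL-Probability.Probability"
begin

datatype fm = FEq nat nat | FRel "nat list" | FNeg fm | FConj fm fm | FEx nat fm

text \<open>Satisfaction in a k-uniform hypergraph with vertex set D and edge set G
  (a set of k-element subsets of D); R(v1..vk) holds iff the vi are distinct
  and form an edge. Quantifiers range over D.\<close>
fun sat :: "'a set \<Rightarrow> 'a set set \<Rightarrow> (nat \<Rightarrow> 'a) \<Rightarrow> fm \<Rightarrow> bool" where
  "sat D G v (FEq i j) = (v i = v j)"
| "sat D G v (FRel is) = (distinct (map v is) \<and> set (map v is) \<in> G)"
| "sat D G v (FNeg \<phi>) = (\<not> sat D G v \<phi>)"
| "sat D G v (FConj \<phi> \<psi>) = (sat D G v \<phi> \<and> sat D G v \<psi>)"
| "sat D G v (FEx i \<phi>) = (\<exists>a\<in>D. sat D G (v(i := a)) \<phi>)"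

fun fv :: "fm \<Rightarrow> nat set" where
  "fv (FEq i j) = {i, j}"
| "fv (FRel is) = set is"
| "fv (FNeg \<phi>) = fv \<phi>"
| "fv (FConj \<phi> \<psi>) = fv \<phi> \<union> fv \<psi>"
| "fv (FEx i \<phi>) = fv \<phi> - {i}"

fun wf :: "nat \<Rightarrow> fm \<Rightarrow> bool" where
  "wf k (FEq i j) = True"
| "wf k (FRel is) = (length is = k)"
| "wf k (FNeg \<phi>) = wf k \<phi>"
| "wf k (FConj \<phi> \<psi>) = (wf k \<phi> \<and> wf k \<psi>)"
| "wf k (FEx i \<phi>) = wf k \<phi>"

definition ksub :: "'a set \<Rightarrow> nat \<Rightarrow> 'a set set" where
  "ksub A n = {S. S \<subseteq> A \<and> finite S \<and> card S = n}"

definition univ_homog :: "nat \<Rightarrow> nat set set \<Rightarrow> bool" where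
  "univ_homog k H \<longleftrightarrow>
     H \<subseteq> ksub (UNIV :: nat set) k
   \<and> (\<forall>(V :: nat set) (G :: nat set set). G \<subseteq> ksub V k \<longrightarrow>
        (\<exists>e. inj_on e V \<and> (\<forall>S\<in>ksub V k. S \<in> G \<longleftrightarrow> e ` S \<in> H)))
   \<and> (\<forall>A B h. finite A \<and> finite B \<and> bij_betw h A B
        \<and> (\<forall>S\<in>ksub A k. S \<in> H \<longleftrightarrow> h ` S \<in> H) \<longrightarrow>
        (\<exists>\<sigma>. bij \<sigma> \<and> (\<forall>S. S \<in> H \<longleftrightarrow> \<sigma> ` S \<in> H) \<and> (\<forall>a\<in>A. \<sigma> a = h a)))"

text \<open>(U, Es) is a model of T_k = Th(H) for the countable universal homogeneous
  k-uniform hypergraph H.\<close>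
definition model_Tk :: "nat \<Rightarrow> 'u set \<Rightarrow> 'u set set \<Rightarrow> bool" where
  "model_Tk k U Es \<longleftrightarrow> Es \<subseteq> ksub U k \<and>
     (\<exists>H. univ_homog k H \<and>
        (\<forall>\<phi>. wf k \<phi> \<and> fv \<phi> = {} \<longrightarrow>
           (sat (UNIV :: nat set) H (\<lambda>_. 0) \<phi> \<longleftrightarrow> sat U Es (\<lambda>_. undefined) \<phi>)))"

definition aleph1_saturated :: "nat \<Rightarrow> 'u set \<Rightarrow> 'u set set \<Rightarrow> bool" where
  "aleph1_saturated k U Es \<longleftrightarrow>
     (\<forall>A \<Phi>. A \<subseteq> U \<and> countable A
        \<and> (\<forall>(\<phi>, v)\<in>\<Phi>. wf k \<phi> \<and> (\<forall>i\<in>fv \<phi> - {0}. v i \<in> A))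
        \<and> (\<forall>F\<subseteq>\<Phi>. finite F \<longrightarrow> (\<exists>a\<in>U. \<forall>(\<phi>, v)\<in>F. sat U Es (v(0 := a)) \<phi>))
        \<longrightarrow> (\<exists>a\<in>U. \<forall>(\<phi>, v)\<in>\<Phi>. sat U Es (v(0 := a)) \<phi>))"

definition elem_sub :: "nat \<Rightarrow> 'u set \<Rightarrow> 'u set set \<Rightarrow> 'u set \<Rightarrow> bool" where
  "elem_sub k U Es M \<longleftrightarrow> M \<subseteq> U \<and>
     (\<forall>\<phi> v. wf k \<phi> \<and> (\<forall>i\<in>fv \<phi>. v i \<in> M) \<longrightarrow> (sat M Es v \<phi> \<longleftrightarrow> sat U Es v \<phi>))"

definition override :: "'u list \<Rightarrow> (nat \<Rightarrow> 'u) \<Rightarrow> nat \<Rightarrow> 'u" where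
  "override a v i = (if i < length a then a ! i else v i)"

definition same_type :: "nat \<Rightarrow> 'u set \<Rightarrow> 'u set set \<Rightarrow> 'u set \<Rightarrow> 'u list \<Rightarrow> 'u list \<Rightarrow> bool" where
  "same_type k U Es M a b \<longleftrightarrow> length a = length b \<and>
     (\<forall>\<phi> v. wf k \<phi> \<and> (\<forall>i\<in>fv \<phi>. length a \<le> i \<longrightarrow> v i \<in> M) \<longrightarrow>
        (sat U Es (override a v) \<phi> \<longleftrightarrow> sat U Es (override b v) \<phi>))"

text \<open>A complete R-type over M in j (named) variables is identified with its truth
  assignment on the (k-j)-subsets D of M: t D = True iff R(x,D) is in the type.
  Every such assignment is consistent; lambda_j is the product of fair coin
  measures, which is exactly the measure determined by the cylinder condition.\<close>
definition lam :: "'u set \<Rightarrow> nat \<Rightarrow> nat \<Rightarrow> ('u set \<Rightarrow> bool) measure" where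
  "lam M k j = PiM (ksub M (k - j)) (\<lambda>_. measure_pmf (bernoulli_pmf (1/2)))"

definition unitI :: "real measure" where
  "unitI = restrict_space lborel {0..1}"

definition meas_iso :: "'a measure \<Rightarrow> 'b measure \<Rightarrow> ('a \<Rightarrow> 'b) \<Rightarrow> ('b \<Rightarrow> 'a) \<Rightarrow> bool" where
  "meas_iso A B f g \<longleftrightarrow> f \<in> measurable A B \<and> distr A B f = B
     \<and> g \<in> measurable B A \<and> distr B A g = A
     \<and> (AE x in A. g (f x) = x) \<and> (AE y in B. f (g y) = y)"

definition tpf :: "nat \<Rightarrow> 'u set \<Rightarrow> 'u set set \<Rightarrow> 'u set \<Rightarrow> ('u set \<Rightarrow> bool)" where
  "tpf k M Es D = restrict (\<lambda>E. D \<union> E \<in> Es) (ksub M (k - card D))"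

definition hg_index :: "nat \<Rightarrow> nat set set" where
  "hg_index k = {I. I \<subseteq> {1..k} \<and> 1 \<le> card I \<and> card I \<le> k - 1}"

definition hg_space :: "nat \<Rightarrow> (nat set \<Rightarrow> real) measure" where
  "hg_space k = PiM (hg_index k) (\<lambda>_. unitI)"

definition borel_hypergraphon :: "nat \<Rightarrow> ((nat set \<Rightarrow> real) \<Rightarrow> real) \<Rightarrow> bool" where
  "borel_hypergraphon k W \<longleftrightarrow> W \<in> borel_measurable (hg_space k)
     \<and> (\<forall>y\<in>space (hg_space k). 0 \<le> W y \<and> W y \<le> 1)
     \<and> (\<forall>\<sigma> y. \<sigma> permutes {1..k} \<and> y \<in> space (hg_space k) \<longrightarrow> W (\<lambda>I. y (\<sigma> ` I)) = W y)"

definition Wsgn :: "bool \<Rightarrow> real \<Rightarrow> real" where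
  "Wsgn e r = (if e then r else 1 - r)"

text \<open>The argument (p, q_[C0]) of W: [k] is identified with {x} \<union> C0, with
  1 corresponding to x and {2..k} to C0 via a fixed bijection.\<close>
definition Warg :: "nat \<Rightarrow> 'u set \<Rightarrow> 'u set set \<Rightarrow> (nat \<Rightarrow> ('u set \<Rightarrow> bool) \<Rightarrow> real)
     \<Rightarrow> 'u set \<Rightarrow> ('u set \<Rightarrow> bool) \<Rightarrow> ('u set \<Rightarrow> 'u set \<Rightarrow> bool) \<Rightarrow> nat set \<Rightarrow> real" where
  "Warg k M Es f C0 p q = restrict (\<lambda>I.
      let \<beta> = (SOME \<beta>. bij_betw \<beta> {2..k} C0); D = \<beta> ` (I - {1}) in
      if 1 \<in> I then (if D = {} then f 1 p else f (card I) (q D))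
      else f (card I) (tpf k M Es D)) (hg_index k)"

definition qidx :: "nat \<Rightarrow> 'u set \<Rightarrow> 'u set set" where
  "qidx k C = {C0. C0 \<subseteq> C \<and> 1 \<le> card C0 \<and> card C0 \<le> k - 2}"

text \<open>mu_W of the complete formula Xi(x,B,C) given by the sign function eps on
  the (k-1)-subsets of B \<union> C.\<close>
definition mu_cf :: "nat \<Rightarrow> 'u set \<Rightarrow> 'u set set \<Rightarrow> (nat \<Rightarrow> ('u set \<Rightarrow> bool) \<Rightarrow> real)
     \<Rightarrow> ((nat set \<Rightarrow> real) \<Rightarrow> real) \<Rightarrow> 'u set \<Rightarrow> 'u set \<Rightarrow> ('u set \<Rightarrow> bool) \<Rightarrow> real" where
  "mu_cf k M Es f W B C eps =
     (LINT p|lam M k 1. LINT q|PiM (qidx k C) (\<lambda>C0. lam M k (1 + card C0)).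
        (if (\<forall>B0\<in>ksub B (k - 1). p B0 = eps B0) then 1 else 0)
      * (\<Prod>C0\<in>qidx k C. \<Prod>B0\<in>ksub B (k - 1 - card C0).
            if q C0 B0 = eps (B0 \<union> C0) then 1 else 0)
      * (\<Prod>C0\<in>ksub C (k - 1). Wsgn (eps C0) (W (Warg k M Es f C0 p q))))"

definition Xi_set :: "nat \<Rightarrow> 'u set \<Rightarrow> 'u set set \<Rightarrow> 'u set \<Rightarrow> ('u set \<Rightarrow> bool) \<Rightarrow> 'u set" where
  "Xi_set k U Es A eps = {x\<in>U. \<forall>S\<in>ksub A (k - 1). (insert x S \<in> Es) = eps S}"

definition inst :: "'u \<Rightarrow> 'u list \<Rightarrow> nat \<Rightarrow> 'u" where
  "inst x a i = (if i = 0 then x else if i \<le> length a then a ! (i - 1) else undefined)"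

text \<open>mu_W(phi(x,a)): with B = params in M, C = params outside M, phi(x,a) differs
  by a finite set from the disjoint union of the complete formulas over BC that
  it contains up to a finite set; mu_W is the sum of their measures.\<close>
definition muW :: "nat \<Rightarrow> 'u set \<Rightarrow> 'u set set \<Rightarrow> 'u set \<Rightarrow> (nat \<Rightarrow> ('u set \<Rightarrow> bool) \<Rightarrow> real)
     \<Rightarrow> ((nat set \<Rightarrow> real) \<Rightarrow> real) \<Rightarrow> fm \<Rightarrow> 'u list \<Rightarrow> real" where
  "muW k U Es M f W \<phi> a =
     (let B = set a \<inter> M; C = set a - M; X = {x\<in>U. sat U Es (inst x a) \<phi>} in
      \<Sum>eps\<in>PiE (ksub (B \<union> C) (k - 1)) (\<lambda>_. UNIV).
        if finite (Xi_set k U Es (B \<union> C) eps - X) then mu_cf k M Es f W B C eps else 0)"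

end

theory Submission
  imports Defs
begin


fun ren :: "(nat \<Rightarrow> nat) \<Rightarrow> fm \<Rightarrow> fm" where
  "ren r (FEq i j) = FEq (r i) (r j)"
| "ren r (FRel is) = FRel (map r is)"
| "ren r (FNeg \<phi>) = FNeg (ren r \<phi>)"
| "ren r (FConj \<phi> \<psi>) = FConj (ren r \<phi>) (ren r \<psi>)"
| "ren r (FEx i \<phi>) = FEx (r i) (ren r \<phi>)"

lemma sat_ren: "inj r \<Longrightarrow> sat D G v (ren r \<phi>) = sat D G (v \<circ> r) \<phi>"
proof (induction \<phi> arbitrary: v)
  case (FEx i \<phi>)
  have "\<And>a. (v(r i := a)) \<circ> r = (v \<circ> r)(i := a)"
    using FEx.prems by (auto simp: fun_eq_iff inj_eq)
  then have "\<And>a. sat D G (v(r i := a)) (ren r \<phi>) = sat D G ((v \<circ> r)(i := a)) \<phi>"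
    using FEx.IH[OF FEx.prems] by metis
  then show ?case by (simp only: ren.simps sat.simps)
qed (auto simp: comp_def)

lemma fv_ren: "inj r \<Longrightarrow> fv (ren r \<phi>) = r ` fv \<phi>"
  by (induction \<phi>) (auto simp: inj_eq image_Un)

lemma wf_ren: "wf k (ren r \<phi>) = wf k \<phi>"
  by (induction \<phi>) auto

lemma sat_cong: "(\<forall>i\<in>fv \<phi>. v i = w i) \<Longrightarrow> sat D G v \<phi> = sat D G w \<phi>"
proof (induction \<phi> arbitrary: v w)
  case (FRel "is")
  then have "map v is = map w is" by auto
  then show ?case by (simp only: sat.simps)
next
  case (FEx i \<phi>)
  have "\<And>a. sat D G (v(i := a)) \<phi> = sat D G (w(i := a)) \<phi>"
    using FEx by (intro FEx.IH) auto
  then show ?case by simp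
next
  case (FConj p q)
  have "sat D G v p = sat D G w p" using FConj.prems by (intro FConj.IH(1)) auto
  moreover have "sat D G v q = sat D G w q" using FConj.prems by (intro FConj.IH(2)) auto
  ultimately show ?case by simp
qed auto

definition FTrue :: fm where "FTrue = FNeg (FEx 0 (FNeg (FEq 0 0)))"

lemma FTrue_simps[simp]: "sat D G v FTrue" "fv FTrue = {}" "wf k FTrue"
  by (auto simp: FTrue_def)

fun conjs :: "fm list \<Rightarrow> fm" where
  "conjs [] = FTrue"
| "conjs (\<phi> # \<phi>s) = FConj \<phi> (conjs \<phi>s)"

lemma sat_conjs[simp]: "sat D G v (conjs \<phi>s) = (\<forall>\<phi>\<in>set \<phi>s. sat D G v \<phi>)"
  by (induction \<phi>s) auto
lemma fv_conjs[simp]: "fv (conjs \<phi>s) = (\<Union>\<phi>\<in>set \<phi>s. fv \<phi>)"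
  by (induction \<phi>s) auto
lemma wf_conjs[simp]: "wf k (conjs \<phi>s) = (\<forall>\<phi>\<in>set \<phi>s. wf k \<phi>)"
  by (induction \<phi>s) auto

fun exs :: "nat list \<Rightarrow> fm \<Rightarrow> fm" where
  "exs [] \<phi> = \<phi>"
| "exs (i # is) \<phi> = FEx i (exs is \<phi>)"

fun upds :: "(nat \<Rightarrow> 'a) \<Rightarrow> nat list \<Rightarrow> 'a list \<Rightarrow> nat \<Rightarrow> 'a" where
  "upds v [] ys = v"
| "upds v (i # is) ys = upds (v(i := hd ys)) is (tl ys)"

lemma fv_exs[simp]: "fv (exs is \<phi>) = fv \<phi> - set is"
  by (induction "is") auto
lemma wf_exs[simp]: "wf k (exs is \<phi>) = wf k \<phi>"
  by (induction "is") auto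

lemma sat_exs: "sat D G v (exs is \<phi>) =
   (\<exists>ys. length ys = length is \<and> set ys \<subseteq> D \<and> sat D G (upds v is ys) \<phi>)"
proof (induction "is" arbitrary: v)
  case Nil then show ?case by auto
next
  case (Cons i "is")
  show ?case
  proof
    assume "sat D G v (exs (i # is) \<phi>)"
    then obtain a ys where "a \<in> D" "length ys = length is" "set ys \<subseteq> D"
      "sat D G (upds (v(i := a)) is ys) \<phi>" using Cons by (auto simp del: fun_upd_apply)
    then show "\<exists>ys. length ys = length (i # is) \<and> set ys \<subseteq> D \<and> sat D G (upds v (i # is) ys) \<phi>"
      by (intro exI[of _ "a # ys"]) auto
  next
    assume "\<exists>ys. length ys = length (i # is) \<and> set ys \<subseteq> D \<and> sat D G (upds v (i # is) ys) \<phi>"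
    then obtain ys where ys: "length ys = length (i # is)" "set ys \<subseteq> D" "sat D G (upds v (i # is) ys) \<phi>"
      by blast
    then obtain a zs where az: "ys = a # zs" by (cases ys) auto
    then have "sat D G (v(i := a)) (exs is \<phi>)" using ys Cons.IH[of "v(i:=a)"] by (auto simp del: fun_upd_apply)
    then show "sat D G v (exs (i # is) \<phi>)" using ys az by auto
  qed
qed

lemma upds_notin: "i \<notin> set is \<Longrightarrow> upds v is ys i = v i"
  by (induction "is" arbitrary: v ys) auto

lemma upds_nth: "distinct is \<Longrightarrow> length ys = length is \<Longrightarrow> j < length is \<Longrightarrow> upds v is ys (is ! j) = ys ! j"
proof (induction "is" arbitrary: v ys j)
  case Nil then show ?case by simp
next
  case (Cons i "is")
  then obtain a zs where ys: "ys = a # zs" by (cases ys) auto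
  show ?case
  proof (cases j)
    case 0 then show ?thesis using Cons ys by (simp add: upds_notin)
  next
    case (Suc j') then show ?thesis using Cons ys by simp
  qed
qed

definition sw :: "nat \<Rightarrow> nat \<Rightarrow> nat \<Rightarrow> nat" where
  "sw a b x = (if x = a then b else if x = b then a else x)"

lemma inj_sw: "inj (sw a b)"
  by (auto simp: inj_def sw_def split: if_splits)

definition cnt :: "nat \<Rightarrow> nat \<Rightarrow> fm \<Rightarrow> fm" where
  "cnt L n \<psi> = exs [Suc L..<Suc L + n]
     (FConj (conjs (map (\<lambda>j. ren (sw L (Suc L + j)) \<psi>) [0..<n]))
            (conjs (concat (map (\<lambda>i. map (\<lambda>j. FNeg (FEq (Suc L + i) (Suc L + j))) [Suc i..<n]) [0..<n]))))"

lemma wf_cnt: "wf k \<psi> \<Longrightarrow> wf k (cnt L n \<psi>)"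
  by (auto simp: cnt_def wf_ren)

lemma fv_cnt: assumes "fv \<psi> \<subseteq> {0..L}" shows "fv (cnt L n \<psi>) \<subseteq> {0..<L}"
proof -
  have "fv (ren (sw L (Suc L + j)) \<psi>) \<subseteq> {0..<L} \<union> {Suc L..<Suc L + n}" if "j < n" for j
    using assms that by (auto simp: fv_ren inj_sw sw_def)
  then have "fv (FConj (conjs (map (\<lambda>j. ren (sw L (Suc L + j)) \<psi>) [0..<n]))
            (conjs (concat (map (\<lambda>i. map (\<lambda>j. FNeg (FEq (Suc L + i) (Suc L + j))) [Suc i..<n]) [0..<n]))))
     \<subseteq> {0..<L} \<union> {Suc L..<Suc L + n}"
    by (simp del: upt_Suc) (fastforce)
  then show ?thesis unfolding cnt_def fv_exs set_upt by blast
qed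

lemma sat_cnt: assumes "fv \<psi> \<subseteq> {0..L}"
  shows "sat D G v (cnt L n \<psi>) \<longleftrightarrow>
    (\<exists>ys. length ys = n \<and> distinct ys \<and> set ys \<subseteq> D \<and> (\<forall>y\<in>set ys. sat D G (v(L := y)) \<psi>))"
proof -
  have key: "sat D G (upds v [Suc L..<Suc (L + length ys)] ys) (ren (sw L (Suc (L + j))) \<psi>) = sat D G (v(L := ys ! j)) \<psi>"
    if "j < length ys" for ys j
  proof -
    have "sat D G (upds v [Suc L..<Suc (L + length ys)] ys) (ren (sw L (Suc (L + j))) \<psi>) = sat D G (upds v [Suc L..<Suc (L + length ys)] ys \<circ> sw L (Suc (L + j))) \<psi>"
      by (simp add: sat_ren inj_sw)
    also have "\<dots> = sat D G (v(L := ys ! j)) \<psi>"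
    proof (rule sat_cong, intro ballI)
      fix i assume i: "i \<in> fv \<psi>"
      show "(upds v [Suc L..<Suc (L + length ys)] ys \<circ> sw L (Suc (L + j))) i = (v(L := ys ! j)) i"
      proof (cases "i = L")
        case True
        have "upds v [Suc L..<Suc (L + length ys)] ys ([Suc L..<Suc (L + length ys)] ! j) = ys ! j" using that by (intro upds_nth) (simp_all del: upt_Suc)
        moreover have "[Suc L..<Suc (L + length ys)] ! j = Suc L + j" using that by (simp del: upt_Suc)
        ultimately show ?thesis using True that by (simp add: sw_def del: upt_Suc)
      next
        case False
        then have "i < L" using i assms by auto
        then show ?thesis using False by (simp add: sw_def upds_notin)
      qed
    qed
    finally show ?thesis .
  qed
  have key2: "upds v [Suc L..<Suc (L + length ys)] ys (Suc (L + i)) = ys ! i" if "i < length ys" for ys i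
    using upds_nth[of "[Suc L..<Suc (L + length ys)]" ys i v] that by (simp del: upt_Suc)
  have "sat D G v (cnt L n \<psi>) \<longleftrightarrow> (\<exists>ys. length ys = n \<and> set ys \<subseteq> D \<and>
      (\<forall>j<n. sat D G (v(L := ys ! j)) \<psi>) \<and> (\<forall>i<n. \<forall>j. i < j \<and> j < n \<longrightarrow> ys ! i \<noteq> ys ! j))"
    unfolding cnt_def sat_exs
    apply (rule iff_exI)
    apply (auto simp: key key2 simp del: upt_Suc)
    done
  also have "\<dots> \<longleftrightarrow> (\<exists>ys. length ys = n \<and> distinct ys \<and> set ys \<subseteq> D \<and> (\<forall>y\<in>set ys. sat D G (v(L := y)) \<psi>))"
  proof (rule iff_exI)
    fix ys :: "'a list"
    have D1: "distinct ys \<longleftrightarrow> (\<forall>i<length ys. \<forall>j. i < j \<and> j < length ys \<longrightarrow> ys ! i \<noteq> ys ! j)"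
      unfolding distinct_conv_nth
    proof (intro iffI allI impI)
      fix i j assume R: "\<forall>i<length ys. \<forall>j. i < j \<and> j < length ys \<longrightarrow> ys ! i \<noteq> ys ! j"
        and ij: "i < length ys" "j < length ys" "i \<noteq> j"
      show "ys ! i \<noteq> ys ! j"
      proof (cases "i < j")
        case True then show ?thesis using R ij by blast
      next
        case False then have "j < i" using ij by simp
        then show ?thesis using R ij by metis
      qed
    qed auto
    have D2: "(\<forall>j<length ys. sat D G (v(L := ys ! j)) \<psi>) \<longleftrightarrow> (\<forall>y\<in>set ys. sat D G (v(L := y)) \<psi>)"
      by (metis in_set_conv_nth)
    show "(length ys = n \<and> set ys \<subseteq> D \<and> (\<forall>j<n. sat D G (v(L := ys ! j)) \<psi>) \<and>
        (\<forall>i<n. \<forall>j. i < j \<and> j < n \<longrightarrow> ys ! i \<noteq> ys ! j)) \<longleftrightarrow>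
      (length ys = n \<and> distinct ys \<and> set ys \<subseteq> D \<and> (\<forall>y\<in>set ys. sat D G (v(L := y)) \<psi>))"
      using D1 D2 by blast
  qed
  finally show ?thesis .
qed



lemma same_type_sym: "same_type k U Es M a b \<Longrightarrow> same_type k U Es M b a"
  unfolding same_type_def by auto

lemma st_general:
  assumes "same_type k U Es M a b" "wf k ch" "fv ch \<subseteq> {0..<length a}"
  shows "sat U Es (override a v) ch = sat U Es (override b v) ch"
proof -
  have "\<forall>i\<in>fv ch. length a \<le> i \<longrightarrow> v i \<in> M" using assms(3) by auto
  then show ?thesis using assms(1,2) unfolding same_type_def by blast
qed

lemma st_eq:
  assumes "same_type k U Es M a b" "i < length a" "j < length a"
  shows "(a ! i = a ! j) = (b ! i = b ! j)"
proof -
  have "length b = length a" using assms by (simp add: same_type_def)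
  then show ?thesis
    using st_general[OF assms(1), of "FEq i j" undefined] assms by (simp add: override_def)
qed

lemma st_M:
  assumes "same_type k U Es M a b" "i < length a" "a ! i \<in> M"
  shows "b ! i = a ! i"
proof -
  have L: "length b = length a" using assms by (simp add: same_type_def)
  let ?v = "\<lambda>_. a ! i"
  have "sat U Es (override a ?v) (FEq i (length a)) = sat U Es (override b ?v) (FEq i (length a))"
    using assms(3) by (intro assms(1)[unfolded same_type_def, THEN conjunct2, rule_format]) auto
  then show ?thesis using assms L by (simp add: override_def)
qed

lemma map_nth_shift: "map (\<lambda>i. es ! (i - L)) [L..<L + length es] = es"
  by (rule nth_equalityI) auto

lemma st_rel:
  assumes "same_type k U Es M a b" "set is \<subseteq> {0..<length a}" "set es \<subseteq> M" "length is + length es = k"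
  shows "(distinct (map (nth a) is @ es) \<and> set (map (nth a) is @ es) \<in> Es) =
         (distinct (map (nth b) is @ es) \<and> set (map (nth b) is @ es) \<in> Es)"
proof -
  have L: "length b = length a" using assms by (simp add: same_type_def)
  let ?L = "length a"
  let ?v = "\<lambda>i. es ! (i - ?L)"
  let ?ch = "FRel (is @ [?L..<?L + length es])"
  have "sat U Es (override a ?v) ?ch = sat U Es (override b ?v) ?ch"
    using assms(2-4) by (intro assms(1)[unfolded same_type_def, THEN conjunct2, rule_format]) auto
  moreover have "map (override a ?v) (is @ [?L..<?L + length es]) = map (nth a) is @ es"
  proof -
    have "map (override a ?v) is = map (nth a) is"
      using assms(2) by (intro map_cong) (auto simp: override_def)
    moreover have "map (override a ?v) [?L..<?L + length es] = map ?v [?L..<?L + length es]"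
      by (intro map_cong) (auto simp: override_def)
    ultimately show ?thesis by (simp only: map_append map_nth_shift)
  qed
  moreover have "map (override b ?v) (is @ [?L..<?L + length es]) = map (nth b) is @ es"
  proof -
    have "map (override b ?v) is = map (nth b) is"
      using assms(2) L by (intro map_cong) (auto simp: override_def)
    moreover have "map (override b ?v) [?L..<?L + length es] = map ?v [?L..<?L + length es]"
      using L by (intro map_cong) (auto simp: override_def)
    ultimately show ?thesis by (simp only: map_append map_nth_shift)
  qed
  ultimately show ?thesis by (simp only: sat.simps)
qed

definition hmap :: "'u list \<Rightarrow> 'u list \<Rightarrow> 'u \<Rightarrow> 'u" where
  "hmap a b x = b ! (SOME i. i < length a \<and> a ! i = x)"

lemma hmap_nth:
  assumes "same_type k U Es M a b" "i < length a"
  shows "hmap a b (a ! i) = b ! i"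
proof -
  have "\<exists>j. j < length a \<and> a ! j = a ! i" using assms by auto
  then have "(SOME j. j < length a \<and> a ! j = a ! i) < length a \<and> a ! (SOME j. j < length a \<and> a ! j = a ! i) = a ! i"
    by (rule someI_ex)
  then show ?thesis unfolding hmap_def using st_eq[OF assms(1)] assms(2) by blast
qed



definition rho :: "nat \<Rightarrow> nat \<Rightarrow> nat" where
  "rho L i = (if i = 0 then L else if i \<le> L then i - 1 else i)"

lemma inj_rho: "inj (rho L)"
  unfolding inj_def rho_def by auto

definition lit :: "'u list \<Rightarrow> ('u set \<Rightarrow> bool) \<Rightarrow> nat list \<Rightarrow> fm" where
  "lit a eps is = (if eps (set (map (nth a) is)) then FRel (length a # is) else FNeg (FRel (length a # is)))"

definition xi_fm :: "nat \<Rightarrow> 'u list \<Rightarrow> ('u set \<Rightarrow> bool) \<Rightarrow> fm" where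
  "xi_fm k a eps = conjs (map (lit a eps)
      (filter (\<lambda>is. distinct (map (nth a) is)) (List.n_lists (k - 1) [0..<length a])))"

definition psi :: "nat \<Rightarrow> 'u list \<Rightarrow> ('u set \<Rightarrow> bool) \<Rightarrow> fm \<Rightarrow> fm" where
  "psi k a eps \<phi> = FConj (xi_fm k a eps) (FNeg (ren (rho (length a)) \<phi>))"

lemma fv_psi: assumes "fv \<phi> \<subseteq> {0..length a}" shows "fv (psi k a eps \<phi>) \<subseteq> {0..length a}"
proof -
  have "fv (ren (rho (length a)) \<phi>) \<subseteq> {0..length a}"
    using assms by (auto simp: fv_ren inj_rho rho_def)
  moreover have "fv (xi_fm k a eps) \<subseteq> {0..length a}"
    by (auto simp: xi_fm_def lit_def set_n_lists)
  ultimately show ?thesis by (auto simp: psi_def)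
qed

lemma wf_psi: "wf k \<phi> \<Longrightarrow> 1 \<le> k \<Longrightarrow> wf k (psi k a eps \<phi>)"
  by (auto simp: psi_def xi_fm_def lit_def set_n_lists wf_ren)

lemma idx_list:
  assumes "finite S" "S \<subseteq> set a"
  shows "\<exists>is. set is \<subseteq> {0..<length a} \<and> distinct (map (nth a) is) \<and> set (map (nth a) is) = S \<and> length is = card S"
proof -
  obtain xs where xs: "set xs = S" "distinct xs" using finite_distinct_list[OF assms(1)] by blast
  define f where "f s = (SOME i. i < length a \<and> a ! i = s)" for s
  have f: "f s < length a \<and> a ! f s = s" if "s \<in> set a" for s
    unfolding f_def by (rule someI_ex) (use that in \<open>auto simp: in_set_conv_nth\<close>)
  have "map (nth a) (map f xs) = xs"
    unfolding map_map by (rule map_idI) (use f xs assms(2) in auto)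
  moreover have "set (map f xs) \<subseteq> {0..<length a}" using f xs assms(2) by auto
  ultimately show ?thesis using xs distinct_card[OF xs(2)]
    by (intro exI[of _ "map f xs"]) auto
qed

lemma sat_psi:
  assumes Es: "Es \<subseteq> ksub U k" and k: "1 \<le> k" and fv: "fv \<phi> \<subseteq> {0..length a}" and x: "x \<in> U"
  shows "sat U Es ((override a v)(length a := x)) (psi k a eps \<phi>) \<longleftrightarrow>
     x \<in> Xi_set k U Es (set a) eps - {x\<in>U. sat U Es (inst x a) \<phi>}"
proof -
  let ?L = "length a"
  let ?w = "(override a v)(?L := x)"
  have A: "sat U Es ?w (ren (rho ?L) \<phi>) = sat U Es (inst x a) \<phi>"
  proof -
    have "sat U Es ?w (ren (rho ?L) \<phi>) = sat U Es (?w \<circ> rho ?L) \<phi>"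
      by (simp add: sat_ren inj_rho)
    also have "\<dots> = sat U Es (inst x a) \<phi>"
      by (rule sat_cong) (use fv in \<open>auto simp: rho_def override_def inst_def\<close>)
    finally show ?thesis .
  qed
  have lit: "sat U Es ?w (FRel (?L # is)) = (insert x (set (map (nth a) is)) \<in> Es)"
    if "set is \<subseteq> {0..<?L}" "length is = k - 1" "distinct (map (nth a) is)" for "is"
  proof -
    have m: "map ?w (?L # is) = x # map (nth a) is"
      using that(1) by (auto simp: override_def)
    have "card (set (map (nth a) is)) = k - 1"
      using that distinct_card[OF that(3)] by simp
    then have "x \<in> set (map (nth a) is) \<Longrightarrow> insert x (set (map (nth a) is)) \<notin> Es"
      using Es k by (auto simp: ksub_def insert_absorb)
    then show ?thesis using that(3) by (simp only: sat.simps m) auto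
  qed
  have B: "sat U Es ?w (xi_fm k a eps) \<longleftrightarrow> (\<forall>S\<in>ksub (set a) (k - 1). (insert x S \<in> Es) = eps S)"
  proof
    assume H: "sat U Es ?w (xi_fm k a eps)"
    show "\<forall>S\<in>ksub (set a) (k - 1). (insert x S \<in> Es) = eps S"
    proof
      fix S assume S: "S \<in> ksub (set a) (k - 1)"
      then obtain "is" where isp: "set is \<subseteq> {0..<?L}" "distinct (map (nth a) is)" "set (map (nth a) is) = S" "length is = k - 1"
        using idx_list[of S a] by (auto simp: ksub_def)
      then have "is \<in> set (filter (\<lambda>is. distinct (map (nth a) is)) (List.n_lists (k - 1) [0..<length a]))"
        using isp by (auto simp: set_n_lists)
      then have "sat U Es ?w (lit a eps is)" using H by (auto simp: xi_fm_def)
      then show "(insert x S \<in> Es) = eps S"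
        using lit[OF isp(1,4,2)] isp(3) by (auto simp: lit_def split: if_splits)
    qed
  next
    assume H: "\<forall>S\<in>ksub (set a) (k - 1). (insert x S \<in> Es) = eps S"
    show "sat U Es ?w (xi_fm k a eps)"
      unfolding xi_fm_def sat_conjs
    proof
      fix ch assume "ch \<in> set (map (lit a eps) (filter (\<lambda>is. distinct (map (nth a) is)) (List.n_lists (k - 1) [0..<length a])))"
      then obtain "is" where isp: "set is \<subseteq> {0..<?L}" "distinct (map (nth a) is)" "length is = k - 1" "ch = lit a eps is"
        by (auto simp: set_n_lists)
      have "set (map (nth a) is) \<in> ksub (set a) (k - 1)"
        using isp distinct_card[OF isp(2)] by (auto simp: ksub_def)
      then show "sat U Es ?w ch"
        using H lit[OF isp(1,3,2)] isp(4) by (auto simp: lit_def)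
    qed
  qed
  have "sat U Es ?w (psi k a eps \<phi>) \<longleftrightarrow> (\<forall>S\<in>ksub (set a) (k - 1). (insert x S \<in> Es) = eps S) \<and> \<not> sat U Es (inst x a) \<phi>"
    unfolding psi_def sat.simps A B ..
  then show ?thesis using x unfolding Xi_set_def by blast
qed

lemma ex_list_card: "(\<exists>ys. length ys = n \<and> distinct ys \<and> set ys \<subseteq> Z) \<longleftrightarrow> (\<exists>S\<subseteq>Z. finite S \<and> card S = n)"
proof
  assume "\<exists>ys. length ys = n \<and> distinct ys \<and> set ys \<subseteq> Z"
  then obtain ys where "length ys = n" "distinct ys" "set ys \<subseteq> Z" by blast
  then show "\<exists>S\<subseteq>Z. finite S \<and> card S = n" by (intro exI[of _ "set ys"]) (auto simp: distinct_card)
next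
  assume "\<exists>S\<subseteq>Z. finite S \<and> card S = n"
  then obtain S where S: "S \<subseteq> Z" "finite S" "card S = n" by blast
  then obtain ys where "set ys = S" "distinct ys" using finite_distinct_list by blast
  then show "\<exists>ys. length ys = n \<and> distinct ys \<and> set ys \<subseteq> Z" using S by (intro exI[of _ ys]) (auto simp: distinct_card)
qed

lemma finite_iff_card: "finite Z \<longleftrightarrow> \<not> (\<forall>n. \<exists>S\<subseteq>Z. finite S \<and> card S = n)"
proof
  assume f: "finite Z"
  show "\<not> (\<forall>n. \<exists>S\<subseteq>Z. finite S \<and> card S = n)"
  proof
    assume "\<forall>n. \<exists>S\<subseteq>Z. finite S \<and> card S = n"
    then obtain S where "S \<subseteq> Z" "card S = Suc (card Z)" by blast
    then have "card S \<le> card Z" "card S = Suc (card Z)" using card_mono[OF f, of S] by blast+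
    then show False by simp
  qed
next
  assume "\<not> (\<forall>n. \<exists>S\<subseteq>Z. finite S \<and> card S = n)"
  then show "finite Z" using infinite_arbitrarily_large by blast
qed

lemma distinct_map_eq:
  assumes "\<forall>i<L. \<forall>j<L. (a ! i = a ! j) = (b ! i = b ! j)" "set is \<subseteq> {0..<L}"
  shows "distinct (map (nth a) is) = distinct (map (nth b) is)"
proof -
  have "\<forall>p<length is. \<forall>q<length is. (a ! (is ! p) = a ! (is ! q)) = (b ! (is ! p) = b ! (is ! q))"
  proof (intro allI impI)
    fix p q assume "p < length is" "q < length is"
    then have "is ! p \<in> set is" "is ! q \<in> set is" by simp_all
    then have "is ! p < L" "is ! q < L" using assms(2) by auto
    then show "(a ! (is ! p) = a ! (is ! q)) = (b ! (is ! p) = b ! (is ! q))" using assms(1) by blast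
  qed
  then show ?thesis by (auto simp: distinct_conv_nth)
qed

lemma psi_eq:
  assumes st: "same_type k U Es M a b"
    and e: "\<And>is. set is \<subseteq> {0..<length a} \<Longrightarrow> length is = k - 1 \<Longrightarrow> distinct (map (nth a) is) \<Longrightarrow>
         eps' (set (map (nth b) is)) = eps (set (map (nth a) is))"
  shows "psi k a eps \<phi> = psi k b eps' \<phi>"
proof -
  have L: "length b = length a" using st by (simp add: same_type_def)
  have eq: "\<forall>i<length a. \<forall>j<length a. (a ! i = a ! j) = (b ! i = b ! j)"
    using st_eq[OF st] by blast
  have f: "filter (\<lambda>is. distinct (map (nth a) is)) (List.n_lists (k - 1) [0..<length a]) =
        filter (\<lambda>is. distinct (map (nth b) is)) (List.n_lists (k - 1) [0..<length b])"
    unfolding L by (rule filter_cong) (auto simp: set_n_lists intro!: distinct_map_eq[OF eq])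
  have m: "map (lit a eps) (filter (\<lambda>is. distinct (map (nth a) is)) (List.n_lists (k - 1) [0..<length a])) =
     map (lit b eps') (filter (\<lambda>is. distinct (map (nth a) is)) (List.n_lists (k - 1) [0..<length a]))"
  proof (rule map_cong[OF refl])
    fix x assume "x \<in> set (filter (\<lambda>is. distinct (map (nth a) is)) (List.n_lists (k - 1) [0..<length a]))"
    then have "set x \<subseteq> {0..<length a}" "length x = k - 1" "distinct (map (nth a) x)"
      by (auto simp: set_n_lists)
    from e[OF this] show "lit a eps x = lit b eps' x" using L by (simp only: lit_def)
  qed
  have m2: "map (lit b eps') (filter (\<lambda>is. distinct (map (nth b) is)) (List.n_lists (k - 1) [0..<length b])) =
     map (lit a eps) (filter (\<lambda>is. distinct (map (nth a) is)) (List.n_lists (k - 1) [0..<length a]))"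
    by (simp only: f[symmetric] m[symmetric])
  show ?thesis unfolding psi_def xi_fm_def m2 by (simp only: L)
qed



lemma fin_equiv_aux:
  assumes Es: "Es \<subseteq> ksub U k" and k: "1 \<le> k" and fv: "fv \<phi> \<subseteq> {0..length a}"
    and Z: "Z = Xi_set k U Es (set a) eps - {x\<in>U. sat U Es (inst x a) \<phi>}"
    and fvp: "fv (psi k a eps \<phi>) \<subseteq> {0..length a}"
  shows "(\<exists>S\<subseteq>Z. finite S \<and> card S = n) = sat U Es (override a v) (cnt (length a) n (psi k a eps \<phi>))"
proof -
  define \<psi> where "\<psi> = psi k a eps \<phi>"
  have H: "\<And>y. y \<in> U \<Longrightarrow> sat U Es ((override a v)(length a := y)) \<psi> = (y \<in> Z)"
    unfolding Z \<psi>_def by (rule sat_psi[OF Es k fv])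
  have ZU: "Z \<subseteq> U" unfolding Z Xi_set_def by blast
  have "sat U Es (override a v) (cnt (length a) n \<psi>) \<longleftrightarrow>
      (\<exists>ys. length ys = n \<and> distinct ys \<and> set ys \<subseteq> U \<and> (\<forall>y\<in>set ys. sat U Es ((override a v)(length a := y)) \<psi>))"
    by (rule sat_cnt) (use fvp in \<open>simp add: \<psi>_def\<close>)
  also have "\<dots> \<longleftrightarrow> (\<exists>ys. length ys = n \<and> distinct ys \<and> set ys \<subseteq> Z)"
  proof (intro iff_exI)
    fix ys :: "'a list"
    show "(length ys = n \<and> distinct ys \<and> set ys \<subseteq> U \<and> (\<forall>y\<in>set ys. sat U Es ((override a v)(length a := y)) \<psi>)) =
         (length ys = n \<and> distinct ys \<and> set ys \<subseteq> Z)"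
    proof (cases "set ys \<subseteq> U")
      case True
      then have "(\<forall>y\<in>set ys. sat U Es ((override a v)(length a := y)) \<psi>) = (\<forall>y\<in>set ys. y \<in> Z)"
        using H by (meson subsetD)
      then show ?thesis using True unfolding subset_iff Ball_def by simp
    next
      case False
      then show ?thesis using ZU by blast
    qed
  qed
  also have "\<dots> \<longleftrightarrow> (\<exists>S\<subseteq>Z. finite S \<and> card S = n)" by (rule ex_list_card)
  finally show ?thesis unfolding \<psi>_def by simp
qed

lemma fin_equiv:
  assumes st: "same_type k U Es M a b" and Es: "Es \<subseteq> ksub U k" and k: "1 \<le> k"
    and wf: "wf k \<phi>" and fv: "fv \<phi> \<subseteq> {0..length a}"
    and pe: "psi k a eps \<phi> = psi k b eps' \<phi>"
  shows "finite (Xi_set k U Es (set a) eps - {x\<in>U. sat U Es (inst x a) \<phi>}) =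
         finite (Xi_set k U Es (set b) eps' - {x\<in>U. sat U Es (inst x b) \<phi>})"
proof -
  have L: "length b = length a" using st by (simp add: same_type_def)
  define Za where "Za = Xi_set k U Es (set a) eps - {x\<in>U. sat U Es (inst x a) \<phi>}"
  define Zb where "Zb = Xi_set k U Es (set b) eps' - {x\<in>U. sat U Es (inst x b) \<phi>}"
  define \<psi> where "\<psi> = psi k a eps \<phi>"
  have fvp: "fv \<psi> \<subseteq> {0..length a}" unfolding \<psi>_def by (rule fv_psi[OF fv])
  have fvb: "fv \<phi> \<subseteq> {0..length b}" using fv L by simp
  have fvpb: "fv (psi k b eps' \<phi>) \<subseteq> {0..length b}" using fvp L pe by (simp add: \<psi>_def)
  have A: "(\<exists>S\<subseteq>Za. finite S \<and> card S = n) = sat U Es (override a v) (cnt (length a) n \<psi>)" for n v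
    unfolding \<psi>_def by (rule fin_equiv_aux[OF Es k fv Za_def fvp[unfolded \<psi>_def]])
  have B: "(\<exists>S\<subseteq>Zb. finite S \<and> card S = n) = sat U Es (override b v) (cnt (length a) n \<psi>)" for n v
    unfolding \<psi>_def pe L[symmetric] by (rule fin_equiv_aux[OF Es k fvb Zb_def fvpb])
  have C: "sat U Es (override a v) (cnt (length a) n \<psi>) = sat U Es (override b v) (cnt (length a) n \<psi>)" for n v
    by (rule st_general[OF st wf_cnt fv_cnt[OF fvp]]) (simp add: \<psi>_def wf_psi[OF wf k])
  have "\<forall>n. (\<exists>S\<subseteq>Za. finite S \<and> card S = n) = (\<exists>S\<subseteq>Zb. finite S \<and> card S = n)"
    using A B C by metis
  then have "finite Za = finite Zb" unfolding finite_iff_card[of Za] finite_iff_card[of Zb] by simp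
  then show ?thesis unfolding Za_def Zb_def .
qed



definition wval :: "nat \<Rightarrow> 'u set \<Rightarrow> 'u set set \<Rightarrow> (nat \<Rightarrow> ('u set \<Rightarrow> bool) \<Rightarrow> real)
     \<Rightarrow> ('u set \<Rightarrow> bool) \<Rightarrow> ('u set \<Rightarrow> 'u set \<Rightarrow> bool) \<Rightarrow> nat set \<Rightarrow> 'u set \<Rightarrow> real" where
  "wval k M Es f p q I D = (if 1 \<in> I then (if D = {} then f 1 p else f (card I) (q D))
      else f (card I) (tpf k M Es D))"

lemma Warg_in: "I \<in> hg_index k \<Longrightarrow>
   Warg k M Es f C0 p q I = wval k M Es f p q I ((SOME \<beta>. bij_betw \<beta> {2..k} C0) ` (I - {1}))"
  by (simp add: Warg_def wval_def Let_def)

lemma Warg_out: "I \<notin> hg_index k \<Longrightarrow> Warg k M Es f C0 p q I = undefined"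
  by (simp add: Warg_def)

lemma space_lam: "space (lam M k j) = (\<Pi>\<^sub>E D\<in>ksub M (k - j). UNIV)"
  by (simp add: lam_def space_PiM)

lemma space_hg: "space (hg_space k) = (\<Pi>\<^sub>E I\<in>hg_index k. {0..1})"
  by (simp add: hg_space_def space_PiM unitI_def)

lemma tpf_space: "tpf k M Es D \<in> space (lam M k (card D))"
  by (simp add: space_lam tpf_def)

lemma Warg_space:
  assumes k: "2 < k"
    and fsp: "\<And>j x. 1 \<le> j \<Longrightarrow> j \<le> k - 1 \<Longrightarrow> x \<in> space (lam M k j) \<Longrightarrow> f j x \<in> {0..1}"
    and C0: "finite C0" "card C0 = k - 1"
    and p: "p \<in> space (lam M k 1)"
    and q: "\<And>D. D \<subseteq> C0 \<Longrightarrow> D \<noteq> {} \<Longrightarrow> card D \<le> k - 2 \<Longrightarrow> q D \<in> space (lam M k (1 + card D))"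
  shows "Warg k M Es f C0 p q \<in> space (hg_space k)"
proof -
  define \<beta> where "\<beta> = (SOME \<beta>. bij_betw \<beta> {2..k} C0)"
  have "\<exists>\<beta>. bij_betw \<beta> {2..k} C0" using C0 by (intro finite_same_card_bij) auto
  then have b: "bij_betw \<beta> {2..k} C0" unfolding \<beta>_def by (rule someI_ex)
  have "Warg k M Es f C0 p q I \<in> {0..1}" if I: "I \<in> hg_index k" for I
  proof -
    have I1: "I \<subseteq> {1..k}" "1 \<le> card I" "card I \<le> k - 1" using I by (auto simp: hg_index_def)
    have fin: "finite I" using I1 by (meson finite_atLeastAtMost finite_subset)
    have sub: "I - {1} \<subseteq> {2..k}" using I1 by auto
    have cD: "card (\<beta> ` (I - {1})) = card (I - {1})"
      using b sub by (intro card_image) (auto simp: bij_betw_def intro: inj_on_subset)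
    have DC: "\<beta> ` (I - {1}) \<subseteq> C0" using b sub by (auto simp: bij_betw_def)
    show ?thesis
    proof (cases "1 \<in> I")
      case True
      show ?thesis
      proof (cases "\<beta> ` (I - {1}) = {}")
        case True
        then show ?thesis using \<open>1 \<in> I\<close> I fsp[of 1 p] p k
          by (simp add: Warg_in wval_def \<beta>_def[symmetric])
      next
        case False
        have cI: "card (I - {1}) = card I - 1" using True fin by simp
        have "q (\<beta> ` (I - {1})) \<in> space (lam M k (1 + card (\<beta> ` (I - {1}))))"
          using q[OF DC False] cD cI I1 by simp
        moreover have "1 + card (\<beta> ` (I - {1})) = card I" using cD cI I1 by simp
        ultimately show ?thesis using \<open>1 \<in> I\<close> False I fsp[of "card I"] I1
          by (simp add: Warg_in wval_def \<beta>_def[symmetric])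
      qed
    next
      case False
      then have "card (\<beta> ` (I - {1})) = card I" using cD by simp
      then have "tpf k M Es (\<beta> ` (I - {1})) \<in> space (lam M k (card I))"
        using tpf_space by metis
      then show ?thesis using False I fsp[of "card I"] I1
        by (simp add: Warg_in wval_def \<beta>_def[symmetric])
    qed
  qed
  then show ?thesis unfolding space_hg by (auto simp: Warg_def)
qed

lemma Warg_perm:
  assumes k: "2 < k" and W: "borel_hypergraphon k W"
    and fsp: "\<And>j x. 1 \<le> j \<Longrightarrow> j \<le> k - 1 \<Longrightarrow> x \<in> space (lam M k j) \<Longrightarrow> f j x \<in> {0..1}"
    and C0: "finite C0" "card C0 = k - 1" and g: "inj_on g C0"
    and p: "p \<in> space (lam M k 1)"
    and qa: "\<And>D. D \<subseteq> g ` C0 \<Longrightarrow> D \<noteq> {} \<Longrightarrow> card D \<le> k - 2 \<Longrightarrow> qa D \<in> space (lam M k (1 + card D))"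
    and qb: "\<And>D. D \<subseteq> C0 \<Longrightarrow> D \<noteq> {} \<Longrightarrow> card D \<le> k - 2 \<Longrightarrow> qb D = qa (g ` D)"
    and tp: "\<And>D. D \<subseteq> C0 \<Longrightarrow> D \<noteq> {} \<Longrightarrow> tpf k M Es (g ` D) = tpf k M Es D"
  shows "W (Warg k M Es f C0 p qb) = W (Warg k M Es f (g ` C0) p qa)"
proof -
  define \<beta>' where "\<beta>' = (SOME \<beta>. bij_betw \<beta> {2..k} C0)"
  define \<beta> where "\<beta> = (SOME \<beta>. bij_betw \<beta> {2..k} (g ` C0))"
  have cg: "card (g ` C0) = k - 1" using C0 g by (simp add: card_image)
  have "\<exists>\<beta>. bij_betw \<beta> {2..k} C0" using C0 by (intro finite_same_card_bij) auto
  then have b': "bij_betw \<beta>' {2..k} C0" unfolding \<beta>'_def by (rule someI_ex)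
  have "\<exists>\<beta>. bij_betw \<beta> {2..k} (g ` C0)" using C0 cg by (intro finite_same_card_bij) auto
  then have b: "bij_betw \<beta> {2..k} (g ` C0)" unfolding \<beta>_def by (rule someI_ex)
  define \<pi> where "\<pi> x = the_inv_into {2..k} \<beta> (g (\<beta>' x))" for x
  have gb: "bij_betw g C0 (g ` C0)" using g by (simp add: bij_betw_def)
  have bpi: "bij_betw \<pi> {2..k} {2..k}"
  proof -
    have "bij_betw (the_inv_into {2..k} \<beta> \<circ> (g \<circ> \<beta>')) {2..k} {2..k}"
      by (rule bij_betw_trans[OF bij_betw_trans[OF b' gb] bij_betw_the_inv_into[OF b]])
    then show ?thesis unfolding \<pi>_def comp_def .
  qed
  have bpi_eq: "\<beta> (\<pi> x) = g (\<beta>' x)" if "x \<in> {2..k}" for x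
  proof -
    have "g (\<beta>' x) \<in> \<beta> ` {2..k}" using b b' that by (auto simp: bij_betw_def)
    then show ?thesis unfolding \<pi>_def using b by (intro f_the_inv_into_f) (auto simp: bij_betw_def)
  qed
  define \<sigma> where "\<sigma> x = (if x \<in> {2..k} then \<pi> x else x)" for x
  have "bij_betw \<sigma> {2..k} {2..k}" using bpi by (rule bij_betw_cong[THEN iffD1, rotated]) (simp add: \<sigma>_def)
  then have sp2: "\<sigma> permutes {2..k}" by (rule bij_imp_permutes) (auto simp: \<sigma>_def)
  then have sp: "\<sigma> permutes {1..k}" by (rule permutes_subset) auto
  have si: "inj \<sigma>" using sp by (rule permutes_inj)
  have s1: "\<sigma> 1 = 1" by (simp add: \<sigma>_def)
  define ya where "ya = Warg k M Es f (g ` C0) p qa"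
  have ysp: "ya \<in> space (hg_space k)" unfolding ya_def
    using k fsp C0(1) cg p qa by (intro Warg_space) auto
  have hgi: "\<sigma> ` I \<in> hg_index k \<longleftrightarrow> I \<in> hg_index k" for I
  proof -
    have "\<sigma> ` I \<subseteq> {1..k} \<longleftrightarrow> I \<subseteq> {1..k}" using permutes_in_image[OF sp] by blast
    moreover have "card (\<sigma> ` I) = card I" using si by (simp add: card_image inj_on_subset)
    ultimately show ?thesis by (simp add: hg_index_def)
  qed
  have eq: "Warg k M Es f C0 p qb = (\<lambda>I. ya (\<sigma> ` I))"
  proof
    fix I
    show "Warg k M Es f C0 p qb I = ya (\<sigma> ` I)"
    proof (cases "I \<in> hg_index k")
      case False
      then show ?thesis using hgi[of I] by (simp add: ya_def Warg_out)
    next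
      case I: True
      have I1: "I \<subseteq> {1..k}" "1 \<le> card I" "card I \<le> k - 1" using I by (auto simp: hg_index_def)
      have fin: "finite I" using I1 by (meson finite_atLeastAtMost finite_subset)
      have sub: "I - {1} \<subseteq> {2..k}" using I1 by auto
      define D' where "D' = \<beta>' ` (I - {1})"
      have D'C: "D' \<subseteq> C0" using b' sub by (auto simp: bij_betw_def D'_def)
      have cD': "card D' = card (I - {1})"
        unfolding D'_def using b' sub by (intro card_image) (auto simp: bij_betw_def intro: inj_on_subset)
      have e1: "\<sigma> ` I - {1} = \<sigma> ` (I - {1})" using si s1 by (simp add: image_set_diff)
      have e2: "\<sigma> ` (I - {1}) = \<pi> ` (I - {1})"
        by (rule image_cong[OF refl]) (use sub in \<open>auto simp: \<sigma>_def\<close>)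
      have e3: "\<beta> ` (\<sigma> ` I - {1}) = g ` D'"
        unfolding e1 e2 D'_def image_image by (rule image_cong[OF refl]) (use bpi_eq sub in auto)
      have c: "card (\<sigma> ` I) = card I" using si by (simp add: card_image inj_on_subset)
      have one: "1 \<in> \<sigma> ` I \<longleftrightarrow> 1 \<in> I" using si s1 by (metis inj_image_mem_iff)
      have L: "Warg k M Es f C0 p qb I = wval k M Es f p qb I D'"
        using I by (simp add: Warg_in D'_def \<beta>'_def)
      have R: "ya (\<sigma> ` I) = wval k M Es f p qa (\<sigma> ` I) (g ` D')"
        using I hgi[of I] by (simp add: ya_def Warg_in e3[symmetric] \<beta>_def)
      show ?thesis
      proof (cases "1 \<in> I")
        case True
        show ?thesis
        proof (cases "D' = {}")
          case True
          then show ?thesis using L R \<open>1 \<in> I\<close> one by (simp add: wval_def)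
        next
          case False
          have cI: "card (I - {1}) = card I - 1" using True fin by simp
          have "qb D' = qa (g ` D')" using D'C False cD' cI I1 by (intro qb) auto
          then show ?thesis using L R \<open>1 \<in> I\<close> one False c by (simp add: wval_def)
        qed
      next
        case False
        then have "D' \<noteq> {}" using I1 unfolding D'_def by auto
        then have "tpf k M Es (g ` D') = tpf k M Es D'" using D'C by (intro tp) auto
        then show ?thesis using L R False one c by (simp add: wval_def)
      qed
    qed
  qed
  have "W (\<lambda>I. ya (\<sigma> ` I)) = W ya"
    using W sp ysp unfolding borel_hypergraphon_def by blast
  then show ?thesis using eq ya_def by simp
qed



lemma integral_bij_preserving:
  fixes F :: "_ \<Rightarrow> real"
  assumes T: "T \<in> measurable P Q" and d: "distr P Q T = Q" and T': "T' \<in> measurable Q P"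
    and inv: "\<And>y. y \<in> space Q \<Longrightarrow> T (T' y) = y"
  shows "integral\<^sup>L Q F = integral\<^sup>L P (\<lambda>x. F (T x))"
proof (cases "F \<in> borel_measurable Q")
  case True
  show ?thesis using integral_distr[OF T True] d by simp
next
  case False
  have nm: "(\<lambda>x. F (T x)) \<notin> borel_measurable P"
  proof
    assume "(\<lambda>x. F (T x)) \<in> borel_measurable P"
    then have "(\<lambda>y. F (T (T' y))) \<in> borel_measurable Q" using T' by (rule measurable_compose[rotated])
    then have "F \<in> borel_measurable Q" by (rule measurable_cong[THEN iffD1, rotated]) (simp add: inv)
    then show False using False by simp
  qed
  have "\<not> integrable Q F" using False by auto
  moreover have "\<not> integrable P (\<lambda>x. F (T x))" using nm by auto
  ultimately show ?thesis by (simp add: not_integrable_integral_eq)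
qed

lemma bij_img:
  assumes "inj_on g C'" "g ` C' = C"
  shows "bij_betw (image g) {D. D \<subseteq> C' \<and> P (card D)} {D. D \<subseteq> C \<and> P (card D)}"
  unfolding bij_betw_def
proof (intro conjI)
  show "inj_on (image g) {D. D \<subseteq> C' \<and> P (card D)}"
    using inj_on_image_Pow[OF assms(1)] by (rule inj_on_subset) auto
  show "image g ` {D. D \<subseteq> C' \<and> P (card D)} = {D. D \<subseteq> C \<and> P (card D)}"
  proof (intro equalityI subsetI)
    fix D assume "D \<in> image g ` {D. D \<subseteq> C' \<and> P (card D)}"
    then obtain D' where "D' \<subseteq> C'" "P (card D')" "D = g ` D'" by auto
    then show "D \<in> {D. D \<subseteq> C \<and> P (card D)}"
      using assms by (auto simp: card_image inj_on_subset)
  next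
    fix D assume D: "D \<in> {D. D \<subseteq> C \<and> P (card D)}"
    define D' where "D' = {x\<in>C'. g x \<in> D}"
    have "g ` D' = D" using D assms(2) by (auto simp: D'_def)
    moreover have "card D' = card D" using assms(1) \<open>g ` D' = D\<close>
      by (metis (no_types, lifting) D'_def card_image inj_on_subset mem_Collect_eq subsetI)
    moreover have "D' \<subseteq> C'" by (auto simp: D'_def)
    ultimately show "D \<in> image g ` {D. D \<subseteq> C' \<and> P (card D)}"
      using D by (intro image_eqI[of _ _ D']) auto
  qed
qed

lemma qidx_eq: "qidx k C = {D. D \<subseteq> C \<and> (\<lambda>n. 1 \<le> n \<and> n \<le> k - 2) (card D)}"
  by (simp add: qidx_def)

lemma ksub_eq: "finite C \<Longrightarrow> ksub C n = {D. D \<subseteq> C \<and> (\<lambda>m. m = n) (card D)}"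
  by (auto simp: ksub_def intro: finite_subset)

lemma prob_lam: "prob_space (lam M k j)"
  unfolding lam_def by (intro prob_space_PiM) (simp add: prob_space_measure_pmf)

lemma mu_cf_inv:
  fixes g :: "'u \<Rightarrow> 'u"
  assumes k: "2 < k" and W: "borel_hypergraphon k W"
    and fsp: "\<And>j x. 1 \<le> j \<Longrightarrow> j \<le> k - 1 \<Longrightarrow> x \<in> space (lam M k j) \<Longrightarrow> f j x \<in> {0..1}"
    and BM: "B \<subseteq> M" and C'M: "C' \<inter> M = {}" and fC': "finite C'"
    and gB: "\<And>x. x \<in> B \<Longrightarrow> g x = x" and inj: "inj_on g C'" and gC: "g ` C' = C"
    and tp: "\<And>D. D \<subseteq> C' \<Longrightarrow> D \<noteq> {} \<Longrightarrow> tpf k M Es (g ` D) = tpf k M Es D"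
    and ep: "\<And>S. S \<in> ksub (B \<union> C') (k - 1) \<Longrightarrow> eps' S = eps (g ` S)"
  shows "mu_cf k M Es f W B C eps = mu_cf k M Es f W B C' eps'"
proof -
  define N where "N = (\<lambda>C0::'u set. lam M k (1 + card C0))"
  define Pa where "Pa = PiM (qidx k C) N"
  define Pb where "Pb = PiM (qidx k C') N"
  define ginv where "ginv = the_inv_into C' g"
  have fC: "finite C" using fC' gC by auto
  have ginv1: "ginv (g x) = x" if "x \<in> C'" for x
    unfolding ginv_def using inj that by (rule the_inv_into_f_f)
  have ginv2: "g (ginv y) = y" "ginv y \<in> C'" if "y \<in> C" for y
    unfolding ginv_def using inj that gC by (auto intro: f_the_inv_into_f the_inv_into_into)
  have injinv: "inj_on ginv C" by (metis ginv2(1) inj_onI)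
  have ginvC: "ginv ` C = C'" using ginv1 ginv2 gC by force
  have bq: "bij_betw (image g) (qidx k C') (qidx k C)"
    unfolding qidx_eq by (rule bij_img[OF inj gC])
  have bq': "bij_betw (image ginv) (qidx k C) (qidx k C')"
    unfolding qidx_eq by (rule bij_img[OF injinv ginvC])
  have bk: "bij_betw (image g) (ksub C' (k - 1)) (ksub C (k - 1))"
    unfolding ksub_eq[OF fC] ksub_eq[OF fC'] by (rule bij_img[OF inj gC])
  have cardg: "card (g ` D) = card D" if "D \<subseteq> C'" for D
    using inj that by (simp add: card_image inj_on_subset)
  have cardginv: "card (ginv ` D) = card D" if "D \<subseteq> C" for D
    using injinv that by (simp add: card_image inj_on_subset)
  define T where "T q = (\<lambda>D'\<in>qidx k C'. q (g ` D'))" for q :: "'u set \<Rightarrow> 'u set \<Rightarrow> bool"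
  define T' where "T' r = (\<lambda>D\<in>qidx k C. r (ginv ` D))" for r :: "'u set \<Rightarrow> 'u set \<Rightarrow> bool"
  have Pb_eq: "PiM (qidx k C') (\<lambda>i. N (g ` i)) = Pb"
    unfolding Pb_def by (rule PiM_cong[OF refl]) (simp add: N_def cardg qidx_def)
  have Pa_eq: "PiM (qidx k C) (\<lambda>i. N (ginv ` i)) = Pa"
    unfolding Pa_def by (rule PiM_cong[OF refl]) (simp add: N_def cardginv qidx_def)
  have dist: "distr Pa Pb T = Pb"
  proof -
    have "distr (PiM (qidx k C) N) (PiM (qidx k C') (\<lambda>i. N (g ` i))) (\<lambda>\<omega>. \<lambda>n\<in>qidx k C'. \<omega> (g ` n))
        = PiM (qidx k C') (\<lambda>i. N (g ` i))"
      using bq by (intro distr_PiM_reindex) (auto simp: N_def prob_lam bij_betw_def)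
    then show ?thesis unfolding Pb_eq Pa_def[symmetric] T_def[abs_def] .
  qed
  have Tm: "T \<in> measurable Pa Pb"
  proof -
    have "(\<lambda>q. \<lambda>n\<in>qidx k C'. q (g ` n)) \<in> measurable Pa (PiM (qidx k C') (\<lambda>i. N (g ` i)))"
    proof (rule measurable_restrict)
      fix n assume "n \<in> qidx k C'"
      then have "g ` n \<in> qidx k C" by (rule bij_betw_apply[OF bq])
      then show "(\<lambda>q. q (g ` n)) \<in> measurable Pa (N (g ` n))"
        unfolding Pa_def by (rule measurable_component_singleton)
    qed
    then show ?thesis unfolding Pb_eq T_def[abs_def] .
  qed
  have T'm: "T' \<in> measurable Pb Pa"
  proof -
    have "(\<lambda>r. \<lambda>n\<in>qidx k C. r (ginv ` n)) \<in> measurable Pb (PiM (qidx k C) (\<lambda>i. N (ginv ` i)))"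
    proof (rule measurable_restrict)
      fix n assume "n \<in> qidx k C"
      then have "ginv ` n \<in> qidx k C'" by (rule bij_betw_apply[OF bq'])
      then show "(\<lambda>q. q (ginv ` n)) \<in> measurable Pb (N (ginv ` n))"
        unfolding Pb_def by (rule measurable_component_singleton)
    qed
    then show ?thesis unfolding Pa_eq T'_def[abs_def] .
  qed
  have inv: "T (T' r) = r" if "r \<in> space Pb" for r
  proof
    fix D'
    show "T (T' r) D' = r D'"
    proof (cases "D' \<in> qidx k C'")
      case True
      then have "g ` D' \<in> qidx k C" using bq by (auto simp: bij_betw_def)
      moreover have "ginv ` g ` D' = D'"
      proof -
        have "D' \<subseteq> C'" using True by (simp add: qidx_def)
        then have "ginv ` g ` D' = (\<lambda>x. x) ` D'"
          unfolding image_image by (intro image_cong[OF refl]) (auto simp: ginv1)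
        then show ?thesis by simp
      qed
      ultimately show ?thesis using True by (simp add: T_def T'_def)
    next
      case False
      have "r \<in> (\<Pi>\<^sub>E D\<in>qidx k C'. space (N D))" using that by (simp add: Pb_def space_PiM)
      then have "r D' = undefined" using False by (rule PiE_arb)
      then show ?thesis using False by (simp add: T_def)
    qed
  qed
  define Fa where "Fa p q = (if (\<forall>B0\<in>ksub B (k - 1). p B0 = eps B0) then 1 else 0)
      * (\<Prod>C0\<in>qidx k C. \<Prod>B0\<in>ksub B (k - 1 - card C0). if q C0 B0 = eps (B0 \<union> C0) then 1 else 0)
      * (\<Prod>C0\<in>ksub C (k - 1). Wsgn (eps C0) (W (Warg k M Es f C0 p q)))" for p q
  define Fb where "Fb p q = (if (\<forall>B0\<in>ksub B (k - 1). p B0 = eps' B0) then 1 else 0)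
      * (\<Prod>C0\<in>qidx k C'. \<Prod>B0\<in>ksub B (k - 1 - card C0). if q C0 B0 = eps' (B0 \<union> C0) then 1 else 0)
      * (\<Prod>C0\<in>ksub C' (k - 1). Wsgn (eps' C0) (W (Warg k M Es f C0 p q)))" for p q
  have ma: "mu_cf k M Es f W B C eps = (LINT p|lam M k 1. LINT q|Pa. Fa p q)"
    unfolding mu_cf_def Fa_def Pa_def N_def ..
  have mb: "mu_cf k M Es f W B C' eps' = (LINT p|lam M k 1. LINT q|Pb. Fb p q)"
    unfolding mu_cf_def Fb_def Pb_def N_def ..
  have main: "Fb p (T q) = Fa p q" if p: "p \<in> space (lam M k 1)" and q: "q \<in> space Pa" for p q
  proof -
    have f1: "(\<forall>B0\<in>ksub B (k - 1). p B0 = eps' B0) = (\<forall>B0\<in>ksub B (k - 1). p B0 = eps B0)"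
    proof -
      have "eps' B0 = eps B0" if "B0 \<in> ksub B (k - 1)" for B0
      proof -
        have "B0 \<in> ksub (B \<union> C') (k - 1)" using that by (auto simp: ksub_def)
        moreover have "g ` B0 = B0"
        proof -
          have "g ` B0 = (\<lambda>x. x) ` B0" using that gB by (intro image_cong[OF refl]) (auto simp: ksub_def)
          then show ?thesis by simp
        qed
        ultimately show ?thesis using ep by simp
      qed
      then show ?thesis by auto
    qed
    define G where "G C0 = (\<Prod>B0\<in>ksub B (k - 1 - card C0). if q C0 B0 = eps (B0 \<union> C0) then 1 else (0::real))" for C0
    have f2: "(\<Prod>C0\<in>qidx k C'. \<Prod>B0\<in>ksub B (k - 1 - card C0). if T q C0 B0 = eps' (B0 \<union> C0) then 1 else (0::real))
        = (\<Prod>C0\<in>qidx k C. \<Prod>B0\<in>ksub B (k - 1 - card C0). if q C0 B0 = eps (B0 \<union> C0) then 1 else 0)"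
    proof -
      have "(\<Prod>B0\<in>ksub B (k - 1 - card C0). if T q C0 B0 = eps' (B0 \<union> C0) then 1 else (0::real)) = G (g ` C0)"
        if C0: "C0 \<in> qidx k C'" for C0
      proof -
        have C0C: "C0 \<subseteq> C'" "1 \<le> card C0" "card C0 \<le> k - 2" using C0 by (auto simp: qidx_def)
        have cg: "card (g ` C0) = card C0" using cardg C0C by simp
        have "(if T q C0 B0 = eps' (B0 \<union> C0) then 1 else (0::real)) =
              (if q (g ` C0) B0 = eps (B0 \<union> g ` C0) then 1 else 0)"
          if B0: "B0 \<in> ksub B (k - 1 - card C0)" for B0
        proof -
          have fin0: "finite C0" using C0C fC' by (auto intro: finite_subset)
          have disj: "B0 \<inter> C0 = {}" using B0 C0C BM C'M by (auto simp: ksub_def)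
          have "card (B0 \<union> C0) = k - 1"
            using B0 fin0 disj C0C k by (simp add: ksub_def card_Un_disjoint)
          then have "B0 \<union> C0 \<in> ksub (B \<union> C') (k - 1)" using B0 fin0 C0C by (auto simp: ksub_def)
          then have "eps' (B0 \<union> C0) = eps (g ` (B0 \<union> C0))" by (rule ep)
          moreover have "g ` (B0 \<union> C0) = B0 \<union> g ` C0"
          proof -
            have "g ` B0 = (\<lambda>x. x) ` B0" using B0 gB by (intro image_cong[OF refl]) (auto simp: ksub_def)
            then show ?thesis by (simp add: image_Un)
          qed
          moreover have "T q C0 B0 = q (g ` C0) B0" using C0 by (simp add: T_def)
          ultimately show ?thesis by simp
        qed
        then show ?thesis unfolding G_def cg by (intro prod.cong refl) auto
      qed
      then have "(\<Prod>C0\<in>qidx k C'. \<Prod>B0\<in>ksub B (k - 1 - card C0). if T q C0 B0 = eps' (B0 \<union> C0) then 1 else (0::real))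
          = (\<Prod>C0\<in>qidx k C'. G (g ` C0))" by (rule prod.cong[OF refl])
      also have "\<dots> = (\<Prod>C0\<in>qidx k C. G C0)" by (rule prod.reindex_bij_betw[OF bq])
      finally show ?thesis unfolding G_def .
    qed
    define H where "H C0 = Wsgn (eps C0) (W (Warg k M Es f C0 p q))" for C0
    have f3: "(\<Prod>C0\<in>ksub C' (k - 1). Wsgn (eps' C0) (W (Warg k M Es f C0 p (T q))))
        = (\<Prod>C0\<in>ksub C (k - 1). Wsgn (eps C0) (W (Warg k M Es f C0 p q)))"
    proof -
      have "Wsgn (eps' C0) (W (Warg k M Es f C0 p (T q))) = H (g ` C0)" if C0: "C0 \<in> ksub C' (k - 1)" for C0
      proof -
        have C0C: "C0 \<subseteq> C'" "finite C0" "card C0 = k - 1" using C0 by (auto simp: ksub_def)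
        have "C0 \<in> ksub (B \<union> C') (k - 1)" using C0 by (auto simp: ksub_def)
        then have e: "eps' C0 = eps (g ` C0)" by (rule ep)
        have "W (Warg k M Es f C0 p (T q)) = W (Warg k M Es f (g ` C0) p q)"
        proof (rule Warg_perm[OF k W fsp C0C(2,3) inj_on_subset[OF inj C0C(1)] p])
          fix D assume D: "D \<subseteq> g ` C0" "D \<noteq> {}" "card D \<le> k - 2"
          have "D \<subseteq> C" using D C0C gC by auto
          then have "finite D" using fC by (rule finite_subset)
          then have "D \<in> qidx k C" using D \<open>D \<subseteq> C\<close> by (auto simp: qidx_def Suc_le_eq card_gt_0_iff)
          then show "q D \<in> space (lam M k (1 + card D))"
            using q by (auto simp: Pa_def space_PiM N_def)
        next
          fix D assume D: "D \<subseteq> C0" "D \<noteq> {}" "card D \<le> k - 2"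
          have "finite D" using D C0C by (auto intro: finite_subset)
          then have "D \<in> qidx k C'" using D C0C by (auto simp: qidx_def Suc_le_eq card_gt_0_iff)
          then show "T q D = q (g ` D)" by (simp add: T_def)
        next
          fix D assume D: "D \<subseteq> C0" "D \<noteq> {}"
          then show "tpf k M Es (g ` D) = tpf k M Es D" using C0C by (intro tp) auto
        qed
        then show ?thesis using e by (simp add: H_def)
      qed
      then have "(\<Prod>C0\<in>ksub C' (k - 1). Wsgn (eps' C0) (W (Warg k M Es f C0 p (T q))))
          = (\<Prod>C0\<in>ksub C' (k - 1). H (g ` C0))" by (rule prod.cong[OF refl])
      also have "\<dots> = (\<Prod>C0\<in>ksub C (k - 1). H C0)" by (rule prod.reindex_bij_betw[OF bk])
      finally show ?thesis unfolding H_def .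
    qed
    show ?thesis unfolding Fa_def Fb_def f1 f2 f3 ..
  qed
  have "(LINT q|Pb. Fb p q) = (LINT q|Pa. Fa p q)" if p: "p \<in> space (lam M k 1)" for p
  proof -
    have "(LINT q|Pb. Fb p q) = (LINT q|Pa. Fb p (T q))"
      apply (rule integral_bij_preserving)
      apply (rule Tm)
      apply (rule dist)
      apply (rule T'm)
      apply (erule inv)
      done
    also have "\<dots> = (LINT q|Pa. Fa p q)"
      using main[OF p] by (intro Bochner_Integration.integral_cong) auto
    finally show ?thesis .
  qed
  then show ?thesis unfolding ma mb by (rule Bochner_Integration.integral_cong[OF refl, symmetric])
qed



lemma st_facts:
  assumes st: "same_type k U Es M a b"
  shows "length b = length a"
    and "\<And>i. i < length a \<Longrightarrow> hmap b a (b ! i) = a ! i"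
    and "\<And>i. i < length a \<Longrightarrow> hmap a b (a ! i) = b ! i"
    and "\<And>i. i < length a \<Longrightarrow> (a ! i \<in> M) = (b ! i \<in> M)"
    and "\<And>i. i < length a \<Longrightarrow> a ! i \<in> M \<Longrightarrow> b ! i = a ! i"
proof -
  have st': "same_type k U Es M b a" by (rule same_type_sym[OF st])
  show L: "length b = length a" using st by (simp add: same_type_def)
  show "\<And>i. i < length a \<Longrightarrow> hmap b a (b ! i) = a ! i" using hmap_nth[OF st'] L by simp
  show "\<And>i. i < length a \<Longrightarrow> hmap a b (a ! i) = b ! i" using hmap_nth[OF st] by simp
  show "\<And>i. i < length a \<Longrightarrow> (a ! i \<in> M) = (b ! i \<in> M)"
    using st_M[OF st] st_M[OF st'] L by metis
  show "\<And>i. i < length a \<Longrightarrow> a ! i \<in> M \<Longrightarrow> b ! i = a ! i" using st_M[OF st] by blast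
qed

lemma tp_lemma:
  assumes st: "same_type k U Es M a b" and Es: "Es \<subseteq> ksub U k"
    and D: "D \<subseteq> set b - M" and inj: "inj_on g (set b)"
    and gn: "\<And>i. i < length a \<Longrightarrow> g (b ! i) = a ! i"
    and gM: "g ` (set b - M) \<subseteq> set a - M"
  shows "tpf k M Es (g ` D) = tpf k M Es D"
proof -
  have L: "length b = length a" using st by (simp add: same_type_def)
  have cD: "card (g ` D) = card D" using inj D by (auto intro: card_image inj_on_subset)
  have finD: "finite D" using D by (auto intro: finite_subset)
  obtain "is" where isp: "set is \<subseteq> {0..<length b}" "distinct (map (nth b) is)" "set (map (nth b) is) = D" "length is = card D"
    using idx_list[OF finD] D by blast
  have ma: "map (nth a) is = map g (map (nth b) is)"
    using isp(1) gn L by (auto intro!: map_cong)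
  have gD: "g ` D \<subseteq> set a - M" using gM D by auto
  have dA: "distinct (map (nth a) is)"
    unfolding ma distinct_map[of g] by (rule conjI[OF isp(2) inj_on_subset[OF inj]]) (use isp(3) D in auto)
  have sA: "set (map (nth a) is) = g ` D" unfolding ma set_map isp(3)[symmetric, unfolded set_map] ..
  have eq: "(g ` D \<union> E \<in> Es) = (D \<union> E \<in> Es)" if E: "E \<in> ksub M (k - card D)" for E
  proof (cases "card D \<le> k")
    case True
    have finE: "finite E" using E by (simp add: ksub_def)
    obtain es where es: "set es = E" "distinct es" using finite_distinct_list[OF finE] by blast
    have les: "length es = k - card D" using es E distinct_card by (fastforce simp: ksub_def)
    have EM: "set es \<subseteq> M" using es E by (simp add: ksub_def)
    have "(distinct (map (nth a) is @ es) \<and> set (map (nth a) is @ es) \<in> Es) =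
          (distinct (map (nth b) is @ es) \<and> set (map (nth b) is @ es) \<in> Es)"
      by (rule st_rel[OF st]) (use isp L EM les True in auto)
    moreover have "distinct (map (nth a) is @ es)" using dA es sA gD EM by auto
    moreover have "distinct (map (nth b) is @ es)" using isp es D EM by auto
    ultimately show ?thesis using sA isp(3) es by simp
  next
    case False
    then have "E = {}" using E by (auto simp: ksub_def)
    moreover have "card (g ` D) \<noteq> k" "card D \<noteq> k" using cD False by auto
    ultimately show ?thesis using Es by (auto simp: ksub_def)
  qed
  show ?thesis unfolding tpf_def cD using eq by (intro restrict_ext) auto
qed

theorem proposition5p14:
  fixes k :: nat and U :: "'u set" and Es :: "'u set set" and M :: "'u set"
    and f :: "nat \<Rightarrow> ('u set \<Rightarrow> bool) \<Rightarrow> real"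
    and W :: "(nat set \<Rightarrow> real) \<Rightarrow> real"
  assumes "k > 2"
    and "model_Tk k U Es"
    and "aleph1_saturated k U Es"
    and "countable M" and "elem_sub k U Es M"
    and "\<forall>j. 1 \<le> j \<and> j \<le> k - 1 \<longrightarrow> (\<exists>g. meas_iso (lam M k j) unitI (f j) g)"
    and "borel_hypergraphon k W"
  shows "\<forall>\<phi> a b. wf k \<phi> \<and> fv \<phi> \<subseteq> {0..length a} \<and> set a \<subseteq> U \<and> set b \<subseteq> U
            \<and> same_type k U Es M a b \<longrightarrow> muW k U Es M f W \<phi> a = muW k U Es M f W \<phi> b"
proof (intro allI impI, elim conjE)
  fix \<phi> and a b :: "'u list"
  assume wf: "wf k \<phi>" and fv: "fv \<phi> \<subseteq> {0..length a}" and aU: "set a \<subseteq> U" and bU: "set b \<subseteq> U"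
    and st: "same_type k U Es M a b"
  have k: "2 < k" by fact
  have k1: "1 \<le> k" using k by simp
  have W: "borel_hypergraphon k W" by fact
  have Es: "Es \<subseteq> ksub U k" using assms(2) by (simp add: model_Tk_def)
  have fsp: "f j x \<in> {0..1}" if j: "1 \<le> j" "j \<le> k - 1" "x \<in> space (lam M k j)" for j x
  proof -
    obtain g' where "meas_iso (lam M k j) unitI (f j) g'" using assms(6) j(1,2) by blast
    then have "f j \<in> measurable (lam M k j) unitI" by (simp add: meas_iso_def)
    then have "f j x \<in> space unitI" using j(3) by (rule measurable_space)
    then show ?thesis by (simp add: unitI_def)
  qed
  note sf = st_facts[OF st]
  have L: "length b = length a" by (rule sf(1))
  define g where "g = hmap b a"
  define h where "h = hmap a b"
  have gn: "g (b ! i) = a ! i" if "i < length a" for i using sf(2) that by (simp add: g_def)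
  have hn: "h (a ! i) = b ! i" if "i < length a" for i using sf(3) that by (simp add: h_def)
  have gh: "g (h x) = x" if "x \<in> set a" for x
    using that gn hn by (auto simp: in_set_conv_nth)
  have hg: "h (g y) = y" if "y \<in> set b" for y
    using that gn hn L by (auto simp: in_set_conv_nth)
  have ga: "g y \<in> set a" if yb: "y \<in> set b" for y
  proof -
    obtain i where "i < length a" "y = b ! i" using yb L by (auto simp: in_set_conv_nth)
    then show ?thesis using gn by simp
  qed
  have ha: "h x \<in> set b" if xa: "x \<in> set a" for x
  proof -
    obtain i where "i < length a" "x = a ! i" using xa by (auto simp: in_set_conv_nth)
    then show ?thesis using hn L by simp
  qed
  have gb: "g ` set b = set a"
  proof
    show "g ` set b \<subseteq> set a" using ga by auto
    show "set a \<subseteq> g ` set b"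
    proof
      fix x assume "x \<in> set a"
      then show "x \<in> g ` set b" using gh[of x] ha[of x] by (intro image_eqI[of _ g "h x"]) auto
    qed
  qed
  have hb: "h ` set a = set b"
  proof
    show "h ` set a \<subseteq> set b" using ha by auto
    show "set b \<subseteq> h ` set a"
    proof
      fix y assume "y \<in> set b"
      then show "y \<in> h ` set a" using hg[of y] ga[of y] by (intro image_eqI[of _ h "g y"]) auto
    qed
  qed
  have injg: "inj_on g (set b)" by (metis hg inj_onI)
  have injh: "inj_on h (set a)" by (metis gh inj_onI)
  have gM: "g y \<in> M \<longleftrightarrow> y \<in> M" if "y \<in> set b" for y
    using that gn sf(4) L by (auto simp: in_set_conv_nth)
  have gid: "g y = y" if "y \<in> set b" "y \<in> M" for y
    using that gn sf(4,5) L by (auto simp: in_set_conv_nth)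
  have BB: "set b \<inter> M = set a \<inter> M"
  proof -
    have "g ` (set b \<inter> M) = set b \<inter> M" using gid by (auto simp: image_iff)
    moreover have "g ` (set b \<inter> M) = set a \<inter> M"
    proof (intro equalityI subsetI)
      fix x assume "x \<in> g ` (set b \<inter> M)" then show "x \<in> set a \<inter> M" using ga gM by auto
    next
      fix x assume x: "x \<in> set a \<inter> M"
      then obtain y where y: "y \<in> set b" "x = g y" using gb by (metis IntD1 imageE)
      then have "y \<in> M" using gM x by auto
      then show "x \<in> g ` (set b \<inter> M)" using y by blast
    qed
    ultimately show ?thesis by simp
  qed
  have gC: "g ` (set b - M) = set a - M"
  proof (intro equalityI subsetI)
    fix x assume "x \<in> g ` (set b - M)" then show "x \<in> set a - M" using ga gM by auto
  next
    fix x assume x: "x \<in> set a - M"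
    then obtain y where y: "y \<in> set b" "x = g y" using gb by (metis DiffD1 imageE)
    then have "y \<notin> M" using gM x by auto
    then show "x \<in> g ` (set b - M)" using y by blast
  qed
  define B where "B = set a \<inter> M"
  define C where "C = set a - M"
  define C' where "C' = set b - M"
  have sa: "B \<union> C = set a" by (auto simp: B_def C_def)
  have sb: "B \<union> C' = set b" using BB by (auto simp: B_def C'_def)
  define Sa where "Sa = PiE (ksub (set a) (k - 1)) (\<lambda>_. UNIV :: bool set)"
  define Sb where "Sb = PiE (ksub (set b) (k - 1)) (\<lambda>_. UNIV :: bool set)"
  define E where "E eps = restrict (\<lambda>S. eps (g ` S)) (ksub (set b) (k - 1))" for eps :: "'u set \<Rightarrow> bool"
  define E' where "E' eps = restrict (\<lambda>S. eps (h ` S)) (ksub (set a) (k - 1))" for eps :: "'u set \<Rightarrow> bool"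
  have kg: "g ` S \<in> ksub (set a) (k - 1)" if "S \<in> ksub (set b) (k - 1)" for S
    using that injg gb by (auto simp: ksub_def card_image inj_on_subset)
  have kh: "h ` S \<in> ksub (set b) (k - 1)" if "S \<in> ksub (set a) (k - 1)" for S
    using that injh hb by (auto simp: ksub_def card_image inj_on_subset)
  have ghS: "g ` h ` S = S" if "S \<subseteq> set a" for S
  proof -
    have "g ` h ` S = (\<lambda>x. x) ` S" unfolding image_image using that gh by (intro image_cong) auto
    then show ?thesis by simp
  qed
  have hgS: "h ` g ` S = S" if "S \<subseteq> set b" for S
  proof -
    have "h ` g ` S = (\<lambda>x. x) ` S" unfolding image_image using that hg by (intro image_cong) auto
    then show ?thesis by simp
  qed
  define summ where "summ c e = (if finite (Xi_set k U Es (set c) e - {x\<in>U. sat U Es (inst x c) \<phi>})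
      then mu_cf k M Es f W (set c \<inter> M) (set c - M) e else 0)" for c e
  have muWa: "muW k U Es M f W \<phi> a = sum (summ a) Sa"
    unfolding muW_def Let_def Sa_def summ_def
    by (simp only: Un_Diff_cancel Int_Un_eq Un_Int_eq Int_Diff_Un)
  have muWb: "muW k U Es M f W \<phi> b = sum (summ b) Sb"
    unfolding muW_def Let_def Sb_def summ_def
    by (simp only: Int_Diff_Un)
  have eq: "summ b (E eps) = summ a eps" if eps: "eps \<in> Sa" for eps
  proof -
    have pe: "psi k a eps \<phi> = psi k b (E eps) \<phi>"
    proof (rule psi_eq[OF st])
      fix "is" assume isp: "set is \<subseteq> {0..<length a}" "length is = k - 1" "distinct (map (nth a) is)"
      have db: "distinct (map (nth b) is)"
        using distinct_map_eq[of "length a" a b "is"] st_eq[OF st] isp by blast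
      have "set (map (nth b) is) \<in> ksub (set b) (k - 1)"
        using db isp L distinct_card[OF db] by (auto simp: ksub_def)
      moreover have "g ` set (map (nth b) is) = set (map (nth a) is)"
        unfolding set_map image_image using isp(1) gn by (intro image_cong) auto
      ultimately show "E eps (set (map (nth b) is)) = eps (set (map (nth a) is))"
        by (simp add: E_def)
    qed
    have fin: "finite (Xi_set k U Es (set a) eps - {x\<in>U. sat U Es (inst x a) \<phi>}) =
         finite (Xi_set k U Es (set b) (E eps) - {x\<in>U. sat U Es (inst x b) \<phi>})"
      by (rule fin_equiv[OF st Es k1 wf fv pe])
    have mu: "mu_cf k M Es f W B C eps = mu_cf k M Es f W B C' (E eps)"
    proof (rule mu_cf_inv[OF k W fsp])
      show "B \<subseteq> M" by (simp add: B_def)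
      show "C' \<inter> M = {}" by (auto simp: C'_def)
      show "finite C'" by (simp add: C'_def)
      show "\<And>x. x \<in> B \<Longrightarrow> g x = x" using gid BB by (auto simp: B_def)
      show "inj_on g C'" using injg by (auto simp: C'_def intro: inj_on_subset)
      show "g ` C' = C" using gC by (simp add: C'_def C_def)
      show "\<And>D. D \<subseteq> C' \<Longrightarrow> D \<noteq> {} \<Longrightarrow> tpf k M Es (g ` D) = tpf k M Es D"
        using tp_lemma[OF st Es _ injg gn] gC by (auto simp: C'_def)
      show "\<And>S. S \<in> ksub (B \<union> C') (k - 1) \<Longrightarrow> E eps S = eps (g ` S)"
        using sb by (simp add: E_def)
    qed auto
    show ?thesis unfolding summ_def using fin mu BB by (simp add: B_def C_def C'_def)
  qed
  have "sum (summ a) Sa = sum (summ b) Sb"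
  proof (rule sum.reindex_bij_witness[of Sa E' E])
    fix eps assume eps: "eps \<in> Sa"
    show "E' (E eps) = eps"
    proof
      fix S show "E' (E eps) S = eps S"
      proof (cases "S \<in> ksub (set a) (k - 1)")
        case True
        have "E' (E eps) S = E eps (h ` S)" using True by (simp add: E'_def)
        also have "\<dots> = eps (g ` h ` S)" using kh[OF True] by (simp add: E_def)
        also have "\<dots> = eps S" using True ghS[of S] by (simp add: ksub_def)
        finally show ?thesis .
      next
        case False
        have "eps S = undefined" using eps False unfolding Sa_def by (rule PiE_arb)
        moreover have "E' (E eps) S = undefined" using False unfolding E'_def restrict_def by (simp only: if_False)
        ultimately show ?thesis by simp
      qed
    qed
    show "E eps \<in> Sb" by (simp add: E_def Sb_def)
    show "summ b (E eps) = summ a eps" by (rule eq[OF eps])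
  next
    fix eps assume eps: "eps \<in> Sb"
    show "E (E' eps) = eps"
    proof
      fix S show "E (E' eps) S = eps S"
      proof (cases "S \<in> ksub (set b) (k - 1)")
        case True
        have "E (E' eps) S = E' eps (g ` S)" using True by (simp add: E_def)
        also have "\<dots> = eps (h ` g ` S)" using kg[OF True] by (simp add: E'_def)
        also have "\<dots> = eps S" using True hgS[of S] by (simp add: ksub_def)
        finally show ?thesis .
      next
        case False
        have "eps S = undefined" using eps False unfolding Sb_def by (rule PiE_arb)
        moreover have "E (E' eps) S = undefined" using False unfolding E_def restrict_def by (simp only: if_False)
        ultimately show ?thesis by simp
      qed
    qed
    show "E' eps \<in> Sa" by (simp add: E'_def Sa_def)
  qed
  then show "muW k U Es M f W \<phi> a = muW k U Es M f W \<phi> b" unfolding muWa muWb .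
qed

end
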